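(* Work in the dense diffuse-noise model of the context under Assumptions (D1)–(D4). Let $(\hat\Phi,\hat{\mathfrak p})$ be any minimizer of the robust $K$-means objective $$\Gamma(\Phi,\mathfrak p)=\sum_{i\in\mathfrak p_1}\min_{\phi\in\Phi}\|\phi-\tilde X_i\|_2+\lambda\,|\mathfrak p_2|$$ over $\Phi\in\mathcal C_k$ and $\mathfrak p\in\mathcal P_2$. For each of the $k$ distinct signal positions $\nu^{1/2}\mathfrak z^j$, let $\mathcal B_j$ be the closed ball of radius $r=\min(\lambda/3,\eta/6)$ about $\nu^{1/2}\mathfrak z^j$. Then, with probability tending to one as $n\to\infty$, the following hold: (a) Each ball $\mathcal B_j$ contains exactly one point of $\hat\Phi$. (b) Every signal vertex $i\in\{1,\dots,n\}$ lies in $\hat{\mathfrak p}_1$. (c) Every signal vertex $i\le n$ is assigned to the center of $\hat\Phi$ lying in the ball about its own true position $\nu^{1/2}Y_i$. In particular, the signal vertices are partitioned by $(\hat\Phi,\hat{\mathfrak p})$ exactly according to their true blocks.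
   Context: $I_{p,q}$ denotes the $d\times d$ diagonal matrix with $p$ entries $+1$ followed by $q$ entries $-1$, where $p+q=d$. An indefinite orthogonal matrix is a matrix $\mathbf Q$ with $\mathbf Q^TI_{p,q}\mathbf Q=I_{p,q}$. Model. Let $\mathcal X_d\subset\mathbb{R}^d$ be a set such that $x^TI_{p,q}y\in[0,1]$ for all $x,y\in\mathcal X_d$, and let $\Omega\subset\mathcal X_d$ be convex. Let $\mathfrak z^1,\dots,\mathfrak z^k\in\mathcal X_d$ be distinct points, and let $\pi_1,\dots,\pi_k>0$ be fixed constants summing to $1$. Draw the signal rows $Y_1,\dots,Y_n$ i.i.d. from $\sum_j\pi_j\delta_{\mathfrak z^j}$. Draw the noise rows $Z_1,\dots,Z_m$ i.i.d. uniform on $\Omega$. Let $\mathbf X=[\mathbf Y^T|\mathbf Z^T]^T\in\mathbb{R}^{(n+m)\times d}$, with rows $X_1,\dots,X_{n+m}$. The graph $G_2$ on $n+m$ vertices has, conditional on $\mathbf X$, independent edges with $\mathbb P(u\sim v)=\nu X_u^TI_{p,q}X_v$, where $\nu\in(0,1]$ is a fixed constant (dense regime). Let $\hat{\mathbf X}=\mathrm{ASE}(\mathbf A,d)=\mathbf U\Sigma^{1/2}$ be the adjacency spectral embedding of the adjacency matrix $\mathbf A$ of $G_2$. Here $\Sigma$ holds the $d$ largest singular values of $\mathbf A$ and $\mathbf U$ the corresponding singular vectors. Notation: $\mathcal P_2$ is the set of ordered partitions $\mathfrak p=(\mathfrak p_1,\mathfrak p_2)$ of $[n+m]$ into two (possibly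 empty) parts. $\mathcal C_k$ is the collection of sets of $k$ distinct points of $\mathbb{R}^d$. A vertex $i\in\mathfrak p_1$ is assigned to the point of $\Phi$ nearest to $\tilde X_i$. Assumptions: (D1) There is a constant $\eta>0$ such that $\|\nu^{1/2}\mathfrak z^j-\nu^{1/2}\mathfrak z^l\|>\eta$ for all $j\ne l$. (D2) $m=o(n)$. (D3) The penalty $\lambda>0$ is bounded away from $0$. (D4) There exist indefinite orthogonal matrices $\mathbf Q_n$ and constants $c,C>0$ such that, with probability tending to one, $\max_{i\le n+m}\|\mathbf Q_n\hat X_i-\nu^{1/2}X_i\|\le C\log^c(n+m)/(n+m)^{1/2}$. We write $\tilde X_i:=\mathbf Q_n\hat X_i$ for the aligned embedded rows. *)

theory Defs
  imports "HOL-Probability.Probability"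
begin

text \<open>Coordinates of R^d are indexed by a finite linearly ordered type; the
  position (0-based) of an index in that order.\<close>
definition rank_idx :: "'d::{finite,linorder} \<Rightarrow> nat" where
  "rank_idx e = card {e'. e' < e}"

definition Ipq :: "nat \<Rightarrow> real^('d::{finite,linorder})^('d::{finite,linorder})" where
  "Ipq p = (\<chi> i j. if i = j then (if rank_idx i < p then 1 else -1) else 0)"

definition indef_orth :: "nat \<Rightarrow> real^('d::{finite,linorder})^('d::{finite,linorder}) \<Rightarrow> bool" where
  "indef_orth p Q \<longleftrightarrow> transpose Q ** Ipq p ** Q = Ipq p"

text \<open>Rows of X = [Y^T | Z^T]^T: first n rows from y, then rows from z.\<close>
definition stack :: "nat \<Rightarrow> (nat \<Rightarrow> 'a) \<Rightarrow> (nat \<Rightarrow> 'a) \<Rightarrow> nat \<Rightarrow> 'a" where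
  "stack n y z i = (if i < n then y i else z (i - n))"

text \<open>Xh is an adjacency spectral embedding ASE(A,d) = U Sigma^(1/2) of the
  N x N matrix A (indices 0..N-1): A = sum_k s_k u_k w_k^T is a singular value
  decomposition with singular values in decreasing order, and row i of Xh has
  coordinate number k (k = 0..d-1) equal to sqrt(s_k) * u_k(i).\<close>
definition is_ASE :: "nat \<Rightarrow> (nat \<Rightarrow> nat \<Rightarrow> real) \<Rightarrow> (nat \<Rightarrow> real^'d::{finite,linorder}) \<Rightarrow> bool" where
  "is_ASE N A Xh \<longleftrightarrow> (\<exists>u w s :: nat \<Rightarrow> _.
      (\<forall>k<N. \<forall>l<N. (\<Sum>i<N. u k i * u l i) = (if k = l then 1 else 0)
                  \<and> (\<Sum>i<N. w k i * w l i) = (if k = l then 1 else 0))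
    \<and> (\<forall>k<N. 0 \<le> s k)
    \<and> (\<forall>k l. k \<le> l \<and> l < N \<longrightarrow> s l \<le> s k)
    \<and> (\<forall>i<N. \<forall>j<N. A i j = (\<Sum>k<N. s k * u k i * w k j))
    \<and> (\<forall>i<N. \<forall>e. Xh i $ e =
          (if rank_idx e < N then sqrt (s (rank_idx e)) * u (rank_idx e) i else 0)))"

text \<open>Conditionally on the rows X, the edges {u,v} (u < v < N) are independent
  with P(A_uv = 1) = nu X_u^T I_{p,q} X_v; expressed through the joint law of
  (X, A) on rectangles.\<close>
definition edge_law :: "'w measure \<Rightarrow> nat \<Rightarrow> real \<Rightarrow> nat \<Rightarrow> ('w \<Rightarrow> nat \<Rightarrow> real^'d::{finite,linorder})
     \<Rightarrow> ('w \<Rightarrow> nat \<Rightarrow> nat \<Rightarrow> real) \<Rightarrow> bool" where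
  "edge_law M N nu p X A \<longleftrightarrow>
    (\<forall>(B :: nat \<Rightarrow> (real^('d::{finite,linorder})) set) (a :: nat \<Rightarrow> nat \<Rightarrow> bool). (\<forall>i. B i \<in> sets borel) \<longrightarrow>
      measure M {\<omega>\<in>space M. (\<forall>i<N. X \<omega> i \<in> B i)
                          \<and> (\<forall>u v. u < v \<and> v < N \<longrightarrow> (A \<omega> u v = 1 \<longleftrightarrow> a u v))}
      = (\<integral>\<omega>. indicator {\<omega>\<in>space M. \<forall>i<N. X \<omega> i \<in> B i} \<omega> *
             (\<Prod>(u,v)\<in>{(u,v). u < v \<and> v < N}.
                 if a u v then nu * (X \<omega> u \<bullet> (Ipq p *v X \<omega> v))
                 else 1 - nu * (X \<omega> u \<bullet> (Ipq p *v X \<omega> v))) \<partial>M))"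

definition rkm_obj :: "real \<Rightarrow> ('a::real_normed_vector) set \<Rightarrow> nat set \<Rightarrow> nat set \<Rightarrow> (nat \<Rightarrow> 'a) \<Rightarrow> real" where
  "rkm_obj lam Phi P1 P2 Xt =
     (\<Sum>i\<in>P1. Min ((\<lambda>\<phi>. norm (\<phi> - Xt i)) ` Phi)) + lam * real (card P2)"

definition rkm_adm :: "nat \<Rightarrow> nat \<Rightarrow> 'a set \<Rightarrow> nat set \<Rightarrow> nat set \<Rightarrow> bool" where
  "rkm_adm k N Phi P1 P2 \<longleftrightarrow> finite Phi \<and> card Phi = k \<and> P1 \<union> P2 = {..<N} \<and> P1 \<inter> P2 = {}"

definition rkm_minimizer :: "nat \<Rightarrow> real \<Rightarrow> nat \<Rightarrow> (nat \<Rightarrow> 'a::real_normed_vector) \<Rightarrow> 'a set \<Rightarrow> nat set \<Rightarrow> nat set \<Rightarrow> bool" where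
  "rkm_minimizer k lam N Xt Phi P1 P2 \<longleftrightarrow> rkm_adm k N Phi P1 P2 \<and>
     (\<forall>Phi' P1' P2'. rkm_adm k N Phi' P1' P2' \<longrightarrow> rkm_obj lam Phi P1 P2 Xt \<le> rkm_obj lam Phi' P1' P2' Xt)"

definition nearest :: "('a::real_normed_vector) set \<Rightarrow> 'a \<Rightarrow> 'a \<Rightarrow> bool" where
  "nearest Phi x \<phi> \<longleftrightarrow> \<phi> \<in> Phi \<and> (\<forall>\<psi>\<in>Phi. norm (\<phi> - x) \<le> norm (\<psi> - x))"

end

theory Submission
  imports Defs "HOL-Real_Asymp.Real_Asymp"
begin


lemma (in prob_space) cheb_count:
  fixes A :: "nat \<Rightarrow> 'a set" and p :: real
  assumes ev: "\<And>i. i<n \<Longrightarrow> A i \<in> events"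
    and pr: "\<And>i. i<n \<Longrightarrow> prob (A i) = p"
    and ind: "\<And>i l. i<n \<Longrightarrow> l<n \<Longrightarrow> i\<noteq>l \<Longrightarrow> prob (A i \<inter> A l) = p*p"
    and p: "0<p" and n: "0<n"
  shows "prob {x\<in>space M. (\<Sum>i<n. indicator (A i) x) < real n * p / 2} \<le> 4 / (real n * p)"
proof -
  define S where "S x = (\<Sum>i<n. indicator (A i) x :: real)" for x
  have intI: "integrable M (indicator (A i) :: 'a \<Rightarrow> real)" if "i<n" for i
    using ev[OF that] by (simp add: integrable_indicator_iff emeasure_eq_measure)
  have intII: "integrable M (indicator (A i \<inter> A l) :: 'a \<Rightarrow> real)" if "i<n" "l<n" for i l
    using ev[OF that(1)] ev[OF that(2)] by (simp add: integrable_indicator_iff emeasure_eq_measure)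
  have mS[measurable]: "S \<in> borel_measurable M"
    unfolding S_def using ev by (intro borel_measurable_sum) (auto intro: borel_measurable_indicator)
  have ES: "expectation S = real n * p"
    unfolding S_def using intI pr ev by (subst Bochner_Integration.integral_sum) auto
  have sq: "(S x - real n * p)^2 = (\<Sum>i<n. \<Sum>l<n. indicator (A i \<inter> A l) x - p * indicator (A i) x - p * indicator (A l) x + p*p)" for x
  proof -
    have "S x - real n * p = (\<Sum>i<n. indicator (A i) x - p)"
      unfolding S_def by (simp add: sum_subtractf)
    then have "(S x - real n * p)^2 = (\<Sum>i<n. \<Sum>l<n. (indicator (A i) x - p) * (indicator (A l) x - p))"
      by (simp add: power2_eq_square sum_product)
    also have "\<dots> = (\<Sum>i<n. \<Sum>l<n. indicator (A i \<inter> A l) x - p * indicator (A i) x - p * indicator (A l) x + p*p)"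
      by (intro sum.cong refl) (simp add: indicator_inter_arith algebra_simps)
    finally show ?thesis .
  qed
  have term_int: "integrable M (\<lambda>x. indicator (A i \<inter> A l) x - p * indicator (A i) x - p * indicator (A l) x + p*p :: real)"
    if "i<n" "l<n" for i l
    using intI[OF that(1)] intI[OF that(2)] intII[OF that] by auto
  have term_E: "expectation (\<lambda>x. indicator (A i \<inter> A l) x - p * indicator (A i) x - p * indicator (A l) x + p*p :: real)
      = (if i = l then p - p*p else 0)" if "i<n" "l<n" for i l
    using intI[OF that(1)] intI[OF that(2)] intII[OF that] ev[OF that(1)] ev[OF that(2)] pr[OF that(1)] pr[OF that(2)]
       ind[OF that]
    by (auto simp: prob_space)
  have intsq: "integrable M (\<lambda>x. (S x - real n * p)^2)"
    unfolding sq using term_int by (auto intro!: Bochner_Integration.integrable_sum)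
  have Esq: "expectation (\<lambda>x. (S x - real n * p)^2) = (\<Sum>i<n. \<Sum>l<n. if i = l then p - p*p else 0)"
    unfolding sq using term_int term_E
    by (subst Bochner_Integration.integral_sum, auto intro!: Bochner_Integration.integrable_sum)
  also have "\<dots> = real n * (p - p*p)" by simp
  finally have var: "variance S = real n * (p - p*p)" using ES by simp
  have intS2: "integrable M (\<lambda>x. S x ^ 2)"
  proof -
    have "integrable M (\<lambda>x. (S x - real n * p)^2 + 2 * (real n * p) * S x - (real n * p)^2)"
      using intsq intI unfolding S_def by (intro Bochner_Integration.integrable_diff Bochner_Integration.integrable_add) auto
    then show ?thesis by (simp add: power2_eq_square algebra_simps)
  qed
  have a: "0 < real n * p / 2" using n p by simp
  have "{x\<in>space M. S x < real n * p / 2} \<subseteq> {x\<in>space M. \<bar>S x - expectation S\<bar> \<ge> real n * p / 2}"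
    using ES by (auto simp: abs_if mult.commute)
  then have "prob {x\<in>space M. S x < real n * p / 2} \<le> prob {x\<in>space M. \<bar>S x - expectation S\<bar> \<ge> real n * p / 2}"
    by (intro finite_measure_mono) auto
  also have "\<dots> \<le> variance S / (real n * p / 2)^2"
    by (rule Chebyshev_inequality[OF mS intS2 a])
  also have "\<dots> = real n * (p - p*p) / (real n * p / 2)^2" using var by simp
  also have "\<dots> \<le> real n * p / (real n * p / 2)^2"
    using p by (intro divide_right_mono mult_left_mono) auto
  also have "\<dots> = 4 / (real n * p)" using n p by (simp add: power2_eq_square field_simps)
  finally show ?thesis unfolding S_def .
qed



lemma tri: "norm (x - z) \<le> norm (x - y) + norm (y - z)" for x y z :: "'a::real_normed_vector"
  by (rule norm_diff_triangle_le) auto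

lemma core:
  fixes w W Xt :: "nat \<Rightarrow> 'a::real_normed_vector" and Phi :: "'a set"
  assumes winj: "inj_on w {..<k}"
    and sep: "\<forall>j<k. \<forall>l<k. j \<noteq> l \<longrightarrow> eta < norm (w j - w l)"
    and rmin: "0 < rmin" "rmin \<le> min (lam/3) (eta/6)"
    and sig: "\<forall>i<n. \<exists>j<k. W i = w j"
    and dl: "0 < \<delta>" and npos: "0 < n" and eps0: "0 \<le> \<epsilon>" and B0: "0 \<le> B"
    and cnt: "\<forall>j<k. \<delta> * real n \<le> real (card {i. i<n \<and> W i = w j})"
    and err: "\<forall>i<N. norm (Xt i - W i) \<le> \<epsilon>"
    and nN: "n \<le> N"
    and Bn: "\<forall>i<N. n \<le> i \<longrightarrow> norm (W i) \<le> B" and Bw: "\<forall>j<k. norm (w j) \<le> B"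
    and eps: "\<epsilon> \<le> rmin/4"
    and small: "real N * \<epsilon> + 2 * B * (real N - real n) < \<delta> * real n * rmin / 2"
    and mini: "rkm_minimizer k lam N Xt Phi P1 P2"
  shows "(let r = min (lam / 3) (eta / 6) in
          (\<forall>j<k. card (Phi \<inter> cball (w j) r) = 1)
        \<and> {..<n} \<subseteq> P1
        \<and> (\<forall>i<n. \<forall>\<phi>. nearest Phi (Xt i) \<phi> \<longleftrightarrow> \<phi> \<in> Phi \<inter> cball (W i) r)
        \<and> (\<forall>i<n. \<forall>i'<n. (\<exists>\<phi>. nearest Phi (Xt i) \<phi> \<and> nearest Phi (Xt i') \<phi>) \<longleftrightarrow> W i = W i'))"
proof -
  define r where "r = min (lam / 3) (eta / 6)"
  have rpos: "rmin \<le> r" "0 < r" using rmin by (auto simp: r_def)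
  have lam3: "3 * r \<le> lam" and eta6: "6 * r \<le> eta" by (auto simp: r_def)
  have epsr: "\<epsilon> \<le> r/4" using eps rpos by simp
  obtain j0 where j0: "j0 < k" using sig npos by blast
  have adm: "rkm_adm k N Phi P1 P2" and minim: "\<And>Phi' P1' P2'. rkm_adm k N Phi' P1' P2' \<Longrightarrow>
      rkm_obj lam Phi P1 P2 Xt \<le> rkm_obj lam Phi' P1' P2' Xt"
    using mini unfolding rkm_minimizer_def by auto
  have finPhi: "finite Phi" and cardPhi: "card Phi = k" and P12: "P1 \<union> P2 = {..<N}" "P1 \<inter> P2 = {}"
    using adm unfolding rkm_adm_def by auto
  have Phine: "Phi \<noteq> {}" using cardPhi j0 by auto
  have finP: "finite P1" "finite P2" using P12 by (metis finite_Un finite_lessThan)+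
  define d where "d i = Min ((\<lambda>\<phi>. norm (\<phi> - Xt i)) ` Phi)" for i
  have d_le: "d i \<le> norm (\<phi> - Xt i)" if "\<phi> \<in> Phi" for i \<phi>
    unfolding d_def using finPhi that by (intro Min_le) auto
  have d_ex: "\<exists>\<phi>\<in>Phi. d i = norm (\<phi> - Xt i)" for i
  proof -
    have "d i \<in> (\<lambda>\<phi>. norm (\<phi> - Xt i)) ` Phi"
      unfolding d_def using finPhi Phine by (intro Min_in) auto
    then show ?thesis by auto
  qed
  have d_nn: "0 \<le> d i" for i using d_ex[of i] by auto
  have obj: "rkm_obj lam Phi P1 P2 Xt = (\<Sum>i\<in>P1. d i) + lam * real (card P2)"
    unfolding rkm_obj_def d_def ..
  define Phis where "Phis = w ` {..<k}"
  have admS: "rkm_adm k N Phis {..<N} {}"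
    unfolding rkm_adm_def Phis_def using winj by (auto simp: card_image)
  have Phisne: "Phis \<noteq> {}" using j0 Phis_def by auto
  define ds where "ds i = Min ((\<lambda>\<phi>. norm (\<phi> - Xt i)) ` Phis)" for i
  have ds_le: "ds i \<le> norm (w j - Xt i)" if "j<k" for i j
    unfolding ds_def Phis_def using that by (intro Min_le) auto
  have ds_sig: "ds i \<le> \<epsilon>" if iin: "i<n" for i
  proof -
    obtain j where j: "j<k" "W i = w j" using sig iin by auto
    have "ds i \<le> norm (w j - Xt i)" by (rule ds_le[OF j(1)])
    also have "\<dots> = norm (Xt i - W i)" using j by (simp add: norm_minus_commute)
    also have "\<dots> \<le> \<epsilon>" using err iin nN by auto
    finally show ?thesis .
  qed
  have ds_noise: "ds i \<le> 2 * B + \<epsilon>" if "n \<le> i" "i < N" for i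
  proof -
    have "ds i \<le> norm (w j0 - Xt i)" by (rule ds_le[OF j0])
    also have "\<dots> \<le> norm (w j0) + norm (W i) + norm (Xt i - W i)"
    proof -
      have "w j0 - Xt i = w j0 - W i - (Xt i - W i)" by simp
      then have "norm (w j0 - Xt i) \<le> norm (w j0 - W i) + norm (Xt i - W i)"
        by (metis norm_triangle_ineq4)
      moreover have "norm (w j0 - W i) \<le> norm (w j0) + norm (W i)" by (rule norm_triangle_ineq4)
      ultimately show ?thesis by linarith
    qed
    also have "\<dots> \<le> B + B + \<epsilon>" using Bw j0 Bn err that by (intro add_mono) auto
    finally show ?thesis by simp
  qed
  have "rkm_obj lam Phis {..<N} {} Xt = (\<Sum>i<N. ds i)"
    unfolding rkm_obj_def ds_def by simp
  also have "\<dots> = (\<Sum>i<n. ds i) + (\<Sum>i\<in>{n..<N}. ds i)"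
    using nN by (metis atLeast0LessThan sum.atLeastLessThan_concat zero_le)
  also have "\<dots> \<le> (\<Sum>i<n. \<epsilon>) + (\<Sum>i\<in>{n..<N}. 2 * B + \<epsilon>)"
    using ds_sig ds_noise by (intro add_mono sum_mono) auto
  also have "\<dots> = real n * \<epsilon> + (real N - real n) * (2 * B + \<epsilon>)"
    using nN by (simp add: of_nat_diff)
  also have "\<dots> = real N * \<epsilon> + 2 * B * (real N - real n)" by (simp add: algebra_simps)
  finally have candle: "rkm_obj lam Phis {..<N} {} Xt \<le> real N * \<epsilon> + 2 * B * (real N - real n)" .
  have objU: "rkm_obj lam Phi P1 P2 Xt < \<delta> * real n * rmin / 2"
    using minim[OF admS] candle small by linarith
  have hit: "Phi \<inter> cball (w j) r \<noteq> {}" if j: "j<k" for j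
  proof
    assume emp: "Phi \<inter> cball (w j) r = {}"
    define S where "S = {i. i<n \<and> W i = w j}"
    have SN: "S \<subseteq> {..<N}" using nN by (auto simp: S_def)
    have finS: "finite S" by (auto simp: S_def)
    have dS: "r - \<epsilon> \<le> d i" if "i \<in> S" for i
    proof -
      obtain \<phi> where \<phi>: "\<phi> \<in> Phi" "d i = norm (\<phi> - Xt i)" using d_ex by blast
      have far: "r < norm (\<phi> - w j)" using emp \<phi>(1) by (auto simp: dist_norm norm_minus_commute)
      have cl: "norm (Xt i - w j) \<le> \<epsilon>" using err that SN by (auto simp: S_def)
      have "norm (\<phi> - w j) \<le> norm (\<phi> - Xt i) + norm (Xt i - w j)" by (rule tri)
      then show ?thesis using far cl \<phi>(2) by linarith
    qed
    have "(r - \<epsilon>) * real (card (P1 \<inter> S)) \<le> (\<Sum>i\<in>P1 \<inter> S. d i)"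
      using dS sum_mono[of "P1 \<inter> S" "\<lambda>_. r - \<epsilon>" d] by (auto simp: mult.commute)
    also have "\<dots> \<le> (\<Sum>i\<in>P1. d i)" using finP d_nn by (intro sum_mono2) auto
    finally have a1: "(r - \<epsilon>) * real (card (P1 \<inter> S)) \<le> (\<Sum>i\<in>P1. d i)" .
    have "card (P2 \<inter> S) \<le> card P2" using finP by (intro card_mono) auto
    then have a2: "(r - \<epsilon>) * real (card (P2 \<inter> S)) \<le> lam * real (card P2)"
      using lam3 epsr rpos eps0 by (intro mult_mono) auto
    have "card S = card (P1 \<inter> S) + card (P2 \<inter> S)"
    proof -
      have "S = (P1 \<inter> S) \<union> (P2 \<inter> S)" using SN P12 by auto
      then have "card S = card ((P1 \<inter> S) \<union> (P2 \<inter> S))" by simp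
      also have "\<dots> = card (P1 \<inter> S) + card (P2 \<inter> S)"
        using finS P12 by (intro card_Un_disjoint) auto
      finally show ?thesis .
    qed
    then have "(r - \<epsilon>) * real (card S) \<le> rkm_obj lam Phi P1 P2 Xt"
      using a1 a2 obj by (simp add: distrib_left)
    moreover have "(r - \<epsilon>) * (\<delta> * real n) \<le> (r - \<epsilon>) * real (card S)"
      using cnt j epsr rpos unfolding S_def by (intro mult_left_mono) auto
    moreover have "\<delta> * real n * rmin / 2 \<le> (r - \<epsilon>) * (\<delta> * real n)"
    proof -
      have "rmin / 2 \<le> r - \<epsilon>" using rpos epsr by linarith
      then have "(rmin/2) * (\<delta> * real n) \<le> (r - \<epsilon>) * (\<delta> * real n)"
        using dl by (intro mult_right_mono) auto
      then show ?thesis by (simp add: algebra_simps)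
    qed
    ultimately show False using objU by linarith
  qed
  have disj: "cball (w j) r \<inter> cball (w l) r = {}" if "j<k" "l<k" "j\<noteq>l" for j l
  proof (rule ccontr)
    assume "cball (w j) r \<inter> cball (w l) r \<noteq> {}"
    then obtain x where "dist (w j) x \<le> r" "dist (w l) x \<le> r" by auto
    then have "dist (w j) (w l) \<le> 2 * r" using dist_triangle2[of "w j" "w l" x] by linarith
    then have "norm (w j - w l) \<le> 2 * r" by (simp add: dist_norm)
    then show False using sep that eta6 rpos by force
  qed
  define c where "c j = card (Phi \<inter> cball (w j) r)" for j
  have c1: "1 \<le> c j" if "j<k" for j
    using hit[OF that] finPhi unfolding c_def by (simp add: Suc_le_eq card_gt_0_iff)
  have Uc: "card (\<Union>j<k. Phi \<inter> cball (w j) r) = (\<Sum>j<k. c j)"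
    unfolding c_def using finPhi disj by (intro card_UN_disjoint) auto
  have Usub: "(\<Union>j<k. Phi \<inter> cball (w j) r) \<subseteq> Phi" by auto
  have "card (\<Union>j<k. Phi \<inter> cball (w j) r) \<le> k"
    using card_mono[OF finPhi Usub] cardPhi by simp
  moreover have "(\<Sum>j<k. c j) = k + (\<Sum>j<k. c j - 1)"
  proof -
    have "(\<Sum>j<k. c j) = (\<Sum>j<k. 1 + (c j - 1))" using c1 by (intro sum.cong refl) (metis lessThan_iff le_add_diff_inverse)
    then show ?thesis by (simp only: sum.distrib) simp
  qed
  ultimately have "(\<Sum>j<k. c j - 1) = 0" using Uc by linarith
  then have cz: "c j - 1 = 0" if "j<k" for j using that by simp
  have ceq: "c j = 1" if "j<k" for j using c1[OF that] cz[OF that] by linarith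
  have Ueq: "(\<Union>j<k. Phi \<inter> cball (w j) r) = Phi"
    using card_subset_eq[OF finPhi Usub] Uc ceq cardPhi by simp
  have inball: "\<exists>l<k. \<psi> \<in> cball (w l) r" if "\<psi> \<in> Phi" for \<psi>
    using Ueq that by blast
  have uniq: "\<psi> = \<phi>" if "j<k" "\<phi> \<in> Phi \<inter> cball (w j) r" "\<psi> \<in> Phi \<inter> cball (w j) r" for j \<phi> \<psi>
    using ceq[OF that(1)] that(2,3) unfolding c_def by (metis card_1_singletonE singletonD)
  have near: "nearest Phi (Xt i) \<phi> \<longleftrightarrow> \<phi> \<in> Phi \<inter> cball (w j) r"
    if i: "i<n" and j: "j<k" "W i = w j" for i j \<phi>
  proof -
    have cl: "norm (Xt i - w j) \<le> \<epsilon>" using err[rule_format, of i] i nN j(2) by (metis order_less_le_trans)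
    have close: "norm (\<phi>' - Xt i) \<le> r + \<epsilon>" if "\<phi>' \<in> cball (w j) r" for \<phi>'
    proof -
      have "norm (\<phi>' - Xt i) \<le> norm (\<phi>' - w j) + norm (w j - Xt i)" by (rule tri)
      then show ?thesis using that cl by (auto simp: dist_norm norm_minus_commute)
    qed
    have farb: "r + \<epsilon> < norm (\<psi> - Xt i)" if psi: "\<psi> \<in> Phi" "\<psi> \<notin> cball (w j) r" for \<psi>
    proof -
      obtain l where l: "l<k" "\<psi> \<in> cball (w l) r" using inball psi(1) by blast
      have lj: "l \<noteq> j" using l psi(2) by auto
      have "norm (w l - w j) \<le> norm (w l - \<psi>) + norm (\<psi> - w j)" by (rule tri)
      moreover have "norm (\<psi> - w j) \<le> norm (\<psi> - Xt i) + norm (Xt i - w j)" by (rule tri)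
      ultimately have "norm (w l - w j) \<le> norm (w l - \<psi>) + norm (\<psi> - Xt i) + norm (Xt i - w j)" by linarith
      moreover have "norm (w l - \<psi>) \<le> r" using l by (auto simp: dist_norm)
      moreover have "eta < norm (w l - w j)" using sep l(1) j lj by auto
      ultimately show ?thesis using cl eta6 epsr rpos by linarith
    qed
    obtain \<phi>j where \<phi>j: "\<phi>j \<in> Phi \<inter> cball (w j) r" using hit[OF j(1)] by blast
    show ?thesis
    proof
      assume nr: "nearest Phi (Xt i) \<phi>"
      then have "\<phi> \<in> Phi" "norm (\<phi> - Xt i) \<le> norm (\<phi>j - Xt i)" using \<phi>j unfolding nearest_def by auto
      moreover have "norm (\<phi>j - Xt i) \<le> r + \<epsilon>" using close \<phi>j by blast
      ultimately show "\<phi> \<in> Phi \<inter> cball (w j) r" using farb[of \<phi>] by force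
    next
      assume ph: "\<phi> \<in> Phi \<inter> cball (w j) r"
      show "nearest Phi (Xt i) \<phi>" unfolding nearest_def
      proof (intro conjI ballI)
        show "\<phi> \<in> Phi" using ph by auto
        fix \<psi> assume psiP: "\<psi> \<in> Phi"
        show "norm (\<phi> - Xt i) \<le> norm (\<psi> - Xt i)"
        proof (cases "\<psi> \<in> cball (w j) r")
          case True
          then have "\<psi> = \<phi>" using uniq[OF j(1) ph] psiP by blast
          then show ?thesis by simp
        next
          case False
          have "norm (\<phi> - Xt i) \<le> r + \<epsilon>" using close ph by blast
          moreover have "r + \<epsilon> < norm (\<psi> - Xt i)" using farb psiP False by blast
          ultimately show ?thesis by linarith
        qed
      qed
    qed
  qed
  have inP1: "{..<n} \<subseteq> P1"
  proof
    fix i assume "i \<in> {..<n}"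
    then have i: "i < n" by simp
    show "i \<in> P1"
    proof (rule ccontr)
      assume ni: "i \<notin> P1"
      then have iP2: "i \<in> P2" using P12 i nN by auto
      obtain j where j: "j<k" "W i = w j" using sig i by auto
      obtain \<phi>j where \<phi>j: "\<phi>j \<in> Phi \<inter> cball (w j) r" using hit[OF j(1)] by blast
      have cl: "norm (Xt i - w j) \<le> \<epsilon>" using err[rule_format, of i] i nN j(2) by (metis order_less_le_trans)
      have "d i \<le> norm (\<phi>j - Xt i)" using d_le \<phi>j by auto
      also have "\<dots> \<le> norm (\<phi>j - w j) + norm (w j - Xt i)" by (rule tri)
      also have "\<dots> \<le> r + \<epsilon>" using \<phi>j cl by (intro add_mono) (auto simp: dist_norm norm_minus_commute)
      finally have di: "d i < lam" using lam3 epsr rpos by linarith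
      have adm': "rkm_adm k N Phi (insert i P1) (P2 - {i})"
        using adm iP2 unfolding rkm_adm_def by auto
      have "rkm_obj lam Phi (insert i P1) (P2 - {i}) Xt = d i + (\<Sum>i\<in>P1. d i) + lam * (real (card P2) - 1)"
      proof -
        have s: "(\<Sum>i\<in>insert i P1. d i) = d i + (\<Sum>i\<in>P1. d i)" using finP(1) ni by simp
        have c0: "1 \<le> card P2" using finP(2) iP2 by (metis One_nat_def Suc_leI card_gt_0_iff empty_iff)
        have "card (P2 - {i}) = card P2 - 1" using iP2 by simp
        then have c: "real (card (P2 - {i})) = real (card P2) - 1" using c0 by simp
        show ?thesis unfolding rkm_obj_def d_def[symmetric] s c by simp
      qed
      also have "\<dots> < rkm_obj lam Phi P1 P2 Xt" unfolding obj using di by (simp add: algebra_simps)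
      finally show False using minim[OF adm'] by linarith
    qed
  qed
  show ?thesis
    unfolding r_def[symmetric] Let_def
  proof (intro conjI allI impI)
    show "card (Phi \<inter> cball (w j) r) = 1" if "j<k" for j using ceq[OF that] c_def by simp
    show "{..<n} \<subseteq> P1" by (rule inP1)
  next
    fix i \<phi> assume i: "i<n"
    obtain j where j: "j<k" "W i = w j" using sig i by auto
    show "nearest Phi (Xt i) \<phi> \<longleftrightarrow> \<phi> \<in> Phi \<inter> cball (W i) r" using near[OF i j] j by simp
  next
    fix i i' assume i: "i<n" and i': "i'<n"
    obtain j where j: "j<k" "W i = w j" using sig i by auto
    obtain j' where j': "j'<k" "W i' = w j'" using sig i' by auto
    show "(\<exists>\<phi>. nearest Phi (Xt i) \<phi> \<and> nearest Phi (Xt i') \<phi>) \<longleftrightarrow> W i = W i'"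
    proof
      assume "\<exists>\<phi>. nearest Phi (Xt i) \<phi> \<and> nearest Phi (Xt i') \<phi>"
      then obtain \<phi> where "\<phi> \<in> cball (w j) r" "\<phi> \<in> cball (w j') r"
        using near[OF i j] near[OF i' j'] by auto
      then have "j = j'" using disj[OF j(1) j'(1)] by blast
      then show "W i = W i'" using j j' by simp
    next
      assume eq: "W i = W i'"
      obtain \<phi>j where \<phi>j: "\<phi>j \<in> Phi \<inter> cball (w j) r" using hit[OF j(1)] by blast
      have "W i' = w j" using eq j by simp
      then show "\<exists>\<phi>. nearest Phi (Xt i) \<phi> \<and> nearest Phi (Xt i') \<phi>"
        using near[OF i j] near[OF i' j(1)] \<phi>j by blast
    qed
  qed
qed


lemma Ipq_comp: "(Ipq p *v y) $ i = (if rank_idx i < p then y $ i else - (y $ i))"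
  for y :: "real^'d::{finite,linorder}"
  unfolding matrix_vector_mult_def Ipq_def by (simp add: if_distrib[of "\<lambda>x. x * _"] cong: if_cong)

lemma Ipq_norm: "norm (Ipq p *v y) = norm y"
  for y :: "real^'d::{finite,linorder}"
  unfolding norm_vec_def by (intro arg_cong2[where f=L2_set] ext refl) (simp add: Ipq_comp)

lemma Xd_bounded:
  fixes Xd :: "(real^'d::{finite,linorder}) set"
  assumes Xd: "\<forall>x\<in>Xd. \<forall>y\<in>Xd. x \<bullet> (Ipq p *v y) \<in> {0..1}"
    and ball: "ball a e \<subseteq> Xd" and e: "0 < e"
  shows "\<forall>y\<in>Xd. norm y \<le> 2 / e"
proof
  fix y assume y: "y \<in> Xd"
  define v where "v = Ipq p *v y"
  have nv: "norm v = norm y" unfolding v_def by (rule Ipq_norm)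
  show "norm y \<le> 2 / e"
  proof (cases "v = 0")
    case True then show ?thesis using nv e by simp
  next
    case False
    then have vp: "0 < norm v" by simp
    define h where "h = (e / 2 / norm v) *\<^sub>R v"
    have nh: "norm h = e/2" unfolding h_def using vp e by simp
    have "a + h \<in> Xd" using ball nh e by (intro subsetD[OF ball]) (simp add: dist_norm)
    moreover have "a \<in> Xd" using ball e by auto
    ultimately have "(a + h) \<bullet> v \<le> 1" "0 \<le> a \<bullet> v" using Xd y unfolding v_def by auto
    then have "h \<bullet> v \<le> 1" by (simp add: inner_add_left)
    moreover have "h \<bullet> v = e / 2 * norm v"
      unfolding h_def using vp by (simp add: power2_norm_eq_inner[symmetric] power2_eq_square)
    ultimately have "e * norm v \<le> 2" by simp
    then show ?thesis using e nv by (simp add: field_simps)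
  qed
qed

lemma Om_interior:
  fixes Om :: "(real^'d::{finite,linorder}) set"
  assumes "convex Om" "Om \<in> sets lborel" "0 < emeasure lborel Om"
  shows "\<exists>a e. 0 < e \<and> ball a e \<subseteq> Om"
proof -
  have "\<not> negligible Om"
  proof
    assume "negligible Om"
    then have "Om \<in> null_sets lebesgue" by (simp add: negligible_iff_null_sets)
    then have "Om \<in> null_sets lborel" using assms(2) null_sets_completion_iff[of Om lborel] by simp
    then show False using assms(3) by (simp add: null_sets_def)
  qed
  then have "interior Om \<noteq> {}" using negligible_convex_interior[OF assms(1)] by simp
  then obtain a where "a \<in> interior Om" by auto
  then show ?thesis by (meson mem_interior)
qed

lemma (in prob_space) prob_Int_ge:
  assumes "A \<in> events" "B \<in> events"
  shows "prob A + prob B - 1 \<le> prob (A \<inter> B)"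
proof -
  have "prob (A \<union> B) \<le> 1" by simp
  moreover have "prob (A \<union> B) = prob A + prob B - prob (A \<inter> B)"
    using assms by (intro measure_Un3) (auto simp: fmeasurable_def less_top[symmetric])
  ultimately show ?thesis by linarith
qed

lemma (in prob_space) indep_pair:
  assumes ind: "indep_vars (\<lambda>_. borel) X I" and il: "i\<in>I" "l\<in>I" "i\<noteq>l"
    and S: "S \<in> sets borel" and T: "T \<in> sets borel"
  shows "prob ((X i -` S \<inter> space M) \<inter> (X l -` T \<inter> space M)) = prob (X i -` S \<inter> space M) * prob (X l -` T \<inter> space M)"
proof -
  define F where "F = (\<lambda>i. {X i -` A \<inter> space M | A. A \<in> sets ((\<lambda>_. borel) i)})"
  have isets: "indep_sets F I" using ind unfolding indep_vars_def F_def
    by (elim conjE indep_sets_mono_sets) (auto intro: sigma_sets.Basic)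
  define G where "G t = (if t = i then X i -` S \<inter> space M else X l -` T \<inter> space M)" for t
  have G: "G \<in> Pi {i,l} F" unfolding G_def F_def using S T by auto
  have "prob (\<Inter>t\<in>{i,l}. G t) = (\<Prod>t\<in>{i,l}. prob (G t))"
    using isets il G unfolding indep_sets_def by (metis empty_not_insert finite.emptyI finite_insert insert_subset empty_subsetI)
  then show ?thesis using il unfolding G_def by (auto simp: Int_commute)
qed


lemma eps_lim:
  fixes m :: "nat \<Rightarrow> nat" and C c :: real
  shows "(\<lambda>n. C * ln (real (n + m n)) powr c / sqrt (real (n + m n))) \<longlonglongrightarrow> 0"
proof -
  have g: "((\<lambda>x::real. C * ln x powr c / sqrt x) \<longlongrightarrow> 0) at_top" by real_asymp
  have N: "filterlim (\<lambda>n. real (n + m n)) at_top sequentially"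
    by (rule filterlim_at_top_mono[OF filterlim_real_sequentially]) auto
  show ?thesis using filterlim_compose[OF g N] by (simp add: o_def)
qed

lemma ratio_lim:
  fixes m :: "nat \<Rightarrow> nat" and R :: real and e :: "nat \<Rightarrow> real"
  assumes D2: "(\<lambda>n. real (m n) / real n) \<longlonglongrightarrow> 0" and e: "e \<longlonglongrightarrow> 0"
  shows "(\<lambda>n. (real (n + m n) * e n + 2 * R * (real (n + m n) - real n)) / real n) \<longlonglongrightarrow> 0"
proof -
  have "(\<lambda>n. (1 + real (m n) / real n) * e n + 2 * R * (real (m n) / real n)) \<longlonglongrightarrow> (1 + 0) * 0 + 2 * R * 0"
    by (intro tendsto_intros D2 e)
  then have L: "(\<lambda>n. (1 + real (m n) / real n) * e n + 2 * R * (real (m n) / real n)) \<longlonglongrightarrow> 0" by simp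
  show ?thesis
  proof (rule Lim_transform_eventually[OF L])
    show "\<forall>\<^sub>F n in sequentially. (1 + real (m n) / real n) * e n + 2 * R * (real (m n) / real n) =
       (real (n + m n) * e n + 2 * R * (real (n + m n) - real n)) / real n"
      using eventually_gt_at_top[of "0::nat"] by eventually_elim (simp add: field_simps)
  qed
qed

theorem mainTheorem3:
  fixes p q k :: nat
    and Xd Om :: "(real^('d::{finite,linorder})) set"
    and z :: "nat \<Rightarrow> real^('d::{finite,linorder})" and pr :: "nat \<Rightarrow> real"
    and nu eta lam0 :: real and lam :: "nat \<Rightarrow> real"
    and m :: "nat \<Rightarrow> nat" and M :: "nat \<Rightarrow> 'w measure"
    and Y Z :: "nat \<Rightarrow> 'w \<Rightarrow> nat \<Rightarrow> real^('d::{finite,linorder})"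
    and A :: "nat \<Rightarrow> 'w \<Rightarrow> nat \<Rightarrow> nat \<Rightarrow> real"
    and Xh :: "nat \<Rightarrow> 'w \<Rightarrow> nat \<Rightarrow> real^('d::{finite,linorder})"
    and Q :: "nat \<Rightarrow> real^('d::{finite,linorder})^('d::{finite,linorder})"
  assumes pq: "p + q = CARD('d::{finite,linorder})"
    and Xd: "\<forall>x\<in>Xd. \<forall>y\<in>Xd. x \<bullet> (Ipq p *v y) \<in> {0..1}"
    and z_in: "\<forall>j<k. z j \<in> Xd" and z_distinct: "inj_on z {..<k}"
    and pr_pos: "\<forall>j<k. 0 < pr j" and pr_sum: "(\<Sum>j<k. pr j) = 1"
    and Om: "Om \<subseteq> Xd" "convex Om" "Om \<in> sets lborel"
            "0 < emeasure lborel Om" "emeasure lborel Om < \<infinity>"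
    and nu: "0 < nu" "nu \<le> 1"
    and prob: "\<forall>n. prob_space (M n)"
    and Y_meas: "\<forall>n. \<forall>i<n. (\<lambda>\<omega>. Y n \<omega> i) \<in> borel_measurable (M n)"
    and Y_law: "\<forall>n. \<forall>i<n. \<forall>j<k. measure (M n) {\<omega>\<in>space (M n). Y n \<omega> i = z j} = pr j"
    and Z_meas: "\<forall>n. \<forall>i<m n. (\<lambda>\<omega>. Z n \<omega> i) \<in> borel_measurable (M n)"
    and Z_law: "\<forall>n. \<forall>i<m n. distr (M n) borel (\<lambda>\<omega>. Z n \<omega> i) = uniform_measure lborel Om"
    and X_indep: "\<forall>n. prob_space.indep_vars (M n) (\<lambda>_. borel)
                        (\<lambda>i \<omega>. stack n (Y n \<omega>) (Z n \<omega>) i) {..<n + m n}"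
    and A_adj: "\<forall>n. \<forall>\<omega>\<in>space (M n). \<forall>u v.
                   A n \<omega> u v \<in> {0, 1} \<and> A n \<omega> u v = A n \<omega> v u \<and> A n \<omega> u u = 0"
    and A_meas: "\<forall>n u v. (\<lambda>\<omega>. A n \<omega> u v) \<in> borel_measurable (M n)"
    and A_law: "\<forall>n. edge_law (M n) (n + m n) nu p (\<lambda>\<omega>. stack n (Y n \<omega>) (Z n \<omega>)) (A n)"
    and ASE: "\<forall>n. \<forall>\<omega>\<in>space (M n). is_ASE (n + m n) (A n \<omega>) (Xh n \<omega>)"
    and D1: "0 < eta" "\<forall>j<k. \<forall>l<k. j \<noteq> l \<longrightarrow> eta < norm (sqrt nu *\<^sub>R z j - sqrt nu *\<^sub>R z l)"
    and D2: "(\<lambda>n. real (m n) / real n) \<longlonglongrightarrow> 0"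
    and D3: "0 < lam0" "\<forall>n. lam0 \<le> lam n"
    and D4_Q: "\<forall>n. indef_orth p (Q n)"
    and D4: "\<exists>c C. 0 < c \<and> 0 < C \<and> (\<exists>E. (\<forall>n. E n \<in> sets (M n))
               \<and> (\<lambda>n. measure (M n) (E n)) \<longlonglongrightarrow> 1
               \<and> (\<forall>n. \<forall>\<omega>\<in>E n. \<forall>i<n + m n.
                    norm (Q n *v Xh n \<omega> i - sqrt nu *\<^sub>R stack n (Y n \<omega>) (Z n \<omega>) i)
                    \<le> C * ln (real (n + m n)) powr c / sqrt (real (n + m n))))"
  shows "\<exists>F. (\<forall>n. F n \<in> sets (M n)) \<and> (\<lambda>n. measure (M n) (F n)) \<longlonglongrightarrow> 1 \<and>
    (\<forall>n. \<forall>\<omega>\<in>F n. \<forall>Phi P1 P2.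
       rkm_minimizer k (lam n) (n + m n) (\<lambda>i. Q n *v Xh n \<omega> i) Phi P1 P2 \<longrightarrow>
       (let r = min (lam n / 3) (eta / 6) in
          (\<forall>j<k. card (Phi \<inter> cball (sqrt nu *\<^sub>R z j) r) = 1)
        \<and> {..<n} \<subseteq> P1
        \<and> (\<forall>i<n. \<forall>\<phi>. nearest Phi (Q n *v Xh n \<omega> i) \<phi> \<longleftrightarrow>
                      \<phi> \<in> Phi \<inter> cball (sqrt nu *\<^sub>R Y n \<omega> i) r)
        \<and> (\<forall>i<n. \<forall>i'<n. (\<exists>\<phi>. nearest Phi (Q n *v Xh n \<omega> i) \<phi> \<and>
                                nearest Phi (Q n *v Xh n \<omega> i') \<phi>) \<longleftrightarrow> Y n \<omega> i = Y n \<omega> i')))"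
  proof -
  obtain c C E where cC: "0 < c" "0 < C" and Emeas: "\<forall>n. E n \<in> sets (M n)"
    and Elim: "(\<lambda>n. measure (M n) (E n)) \<longlonglongrightarrow> 1"
    and Ebound: "\<forall>n. \<forall>\<omega>\<in>E n. \<forall>i<n + m n.
                    norm (Q n *v Xh n \<omega> i - sqrt nu *\<^sub>R stack n (Y n \<omega>) (Z n \<omega>) i)
                    \<le> C * ln (real (n + m n)) powr c / sqrt (real (n + m n))"
    using D4 by blast
  define eps where "eps n = C * ln (real (n + m n)) powr c / sqrt (real (n + m n))" for n
  have eps0: "0 \<le> eps n" for n unfolding eps_def using cC by simp
  have k0: "0 < k" using pr_sum by (cases k) auto
  obtain a e where e: "0 < e" "ball a e \<subseteq> Om" using Om_interior[OF Om(2) Om(3) Om(4)] by blast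
  define R where "R = 2 / e"
  have Rb: "\<forall>y\<in>Xd. norm y \<le> R" unfolding R_def
    using Xd_bounded[OF Xd _ e(1)] e(2) Om(1) by blast
  have R0: "0 \<le> R" using e by (simp add: R_def)
  define pmin where "pmin = Min (pr ` {..<k})"
  have pmin: "0 < pmin" "\<forall>j<k. pmin \<le> pr j"
  proof -
    have "pmin \<in> pr ` {..<k}" unfolding pmin_def using k0 by (intro Min_in) auto
    then show "0 < pmin" using pr_pos by auto
    show "\<forall>j<k. pmin \<le> pr j" unfolding pmin_def by auto
  qed
  define \<delta> where "\<delta> = pmin / 2"
  have \<delta>: "0 < \<delta>" using pmin by (simp add: \<delta>_def)
  define r0 where "r0 = min (lam0/3) (eta/6)"
  have r0: "0 < r0" using D1(1) D3(1) by (simp add: r0_def)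
  define good where "good n \<longleftrightarrow> 0 < n \<and> eps n \<le> r0/4 \<and>
      real (n + m n) * eps n + 2 * R * (real (n + m n) - real n) < \<delta> * real n * r0 / 2" for n
  have ev_good: "eventually good sequentially"
  proof -
    have el: "eps \<longlonglongrightarrow> 0" unfolding eps_def by (rule eps_lim)
    have e1: "eventually (\<lambda>n. eps n < r0/4) sequentially"
      using order_tendstoD(2)[OF el, of "r0/4"] r0 by simp
    have rl: "(\<lambda>n. (real (n + m n) * eps n + 2 * R * (real (n + m n) - real n)) / real n) \<longlonglongrightarrow> 0"
      by (rule ratio_lim[OF D2 el])
    have e2: "eventually (\<lambda>n. (real (n + m n) * eps n + 2 * R * (real (n + m n) - real n)) / real n < \<delta> * r0 / 2) sequentially"
      using order_tendstoD(2)[OF rl, of "\<delta> * r0 / 2"] r0 \<delta> by simp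
    show ?thesis using e1 e2 eventually_gt_at_top[of "0::nat"]
    proof eventually_elim
      case (elim n)
      then have "real (n + m n) * eps n + 2 * R * (real (n + m n) - real n) < \<delta> * r0 / 2 * real n"
        by (simp add: divide_less_eq)
      then show ?case using elim unfolding good_def by (simp add: algebra_simps)
    qed
  qed
  define Aev where "Aev n j i = {\<omega>\<in>space (M n). Y n \<omega> i = z j}" for n j i
  define cnt where "cnt n j \<omega> = (\<Sum>i<n. indicator (Aev n j i) \<omega> :: real)" for n j \<omega>
  define G where "G n = {\<omega>\<in>space (M n). (\<forall>i\<in>{..<n}. Y n \<omega> i \<in> z ` {..<k}) \<and> (\<forall>i\<in>{..<m n}. Z n \<omega> i \<in> Om)}" for n
  define K where "K n = {\<omega>\<in>space (M n). \<forall>j\<in>{..<k}. real n * pr j / 2 \<le> cnt n j \<omega>}" for n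
  define F where "F n = (if good n then E n \<inter> G n \<inter> K n else {})" for n
  define s where "s = 4 * (\<Sum>j<k. 1 / pr j)"
  have Aev_sets: "Aev n j i \<in> sets (M n)" if "i<n" for n j i
  proof -
    have "(\<lambda>\<omega>. Y n \<omega> i) -` {z j} \<inter> space (M n) \<in> sets (M n)"
      using Y_meas that by (intro measurable_sets) auto
    moreover have "(\<lambda>\<omega>. Y n \<omega> i) -` {z j} \<inter> space (M n) = Aev n j i" unfolding Aev_def by auto
    ultimately show ?thesis by simp
  qed
  have cnt_meas: "cnt n j \<in> borel_measurable (M n)" for n j
    unfolding cnt_def using Aev_sets by (intro borel_measurable_sum) (auto intro: borel_measurable_indicator)
  have cnt_card: "cnt n j \<omega> = real (card {i. i<n \<and> Y n \<omega> i = z j})" if "\<omega> \<in> space (M n)" for n j \<omega>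
  proof -
    have "cnt n j \<omega> = (\<Sum>i<n. of_bool (Y n \<omega> i = z j))"
      unfolding cnt_def Aev_def using that by (intro sum.cong) (auto simp: indicator_def)
    also have "\<dots> = real (card ({..<n} \<inter> {i. Y n \<omega> i = z j}))" by simp
    also have "{..<n} \<inter> {i. Y n \<omega> i = z j} = {i. i<n \<and> Y n \<omega> i = z j}" by auto
    finally show ?thesis .
  qed
  have probG: "G n \<in> sets (M n) \<and> measure (M n) (G n) = 1" for n
  proof -
    interpret P: prob_space "M n" using prob by auto
    have Ysets: "{\<omega>\<in>space (M n). Y n \<omega> i \<in> z ` {..<k}} \<in> sets (M n)" if "i<n" for i
    proof -
      have "(\<lambda>\<omega>. Y n \<omega> i) -` (z ` {..<k}) \<inter> space (M n) \<in> sets (M n)"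
        using Y_meas that by (intro measurable_sets) (auto intro: borel_closed finite_imp_closed)
      moreover have "(\<lambda>\<omega>. Y n \<omega> i) -` (z ` {..<k}) \<inter> space (M n) = {\<omega>\<in>space (M n). Y n \<omega> i \<in> z ` {..<k}}" by auto
      ultimately show ?thesis by simp
    qed
    have Zsets: "{\<omega>\<in>space (M n). Z n \<omega> i \<in> Om} \<in> sets (M n)" if "i<m n" for i
    proof -
      have "(\<lambda>\<omega>. Z n \<omega> i) -` Om \<inter> space (M n) \<in> sets (M n)"
        using Z_meas that Om(3) by (intro measurable_sets) auto
      moreover have "(\<lambda>\<omega>. Z n \<omega> i) -` Om \<inter> space (M n) = {\<omega>\<in>space (M n). Z n \<omega> i \<in> Om}" by auto
      ultimately show ?thesis by simp
    qed
    have Gs: "G n \<in> sets (M n)" unfolding G_def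
      by (intro sets.sets_Collect_conj sets.sets_Collect_finite_All Ysets Zsets) auto
    have AEY: "AE \<omega> in M n. Y n \<omega> i \<in> z ` {..<k}" if i: "i<n" for i
    proof -
      have eq: "{\<omega>\<in>space (M n). Y n \<omega> i \<in> z ` {..<k}} = (\<Union>j\<in>{..<k}. Aev n j i)"
        unfolding Aev_def by auto
      have "measure (M n) {\<omega>\<in>space (M n). Y n \<omega> i \<in> z ` {..<k}} = (\<Sum>j<k. measure (M n) (Aev n j i))"
        unfolding eq using Aev_sets[OF i] z_distinct
        by (intro P.finite_measure_finite_Union) (auto simp: disjoint_family_on_def Aev_def inj_on_def)
      also have "\<dots> = (\<Sum>j<k. pr j)" using Y_law i unfolding Aev_def by auto
      finally have "measure (M n) {\<omega>\<in>space (M n). Y n \<omega> i \<in> z ` {..<k}} = 1" using pr_sum by simp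
      then have "AE x in M n. x \<in> {\<omega>\<in>space (M n). Y n \<omega> i \<in> z ` {..<k}}"
        using P.prob_eq_1[OF Ysets[OF i]] by simp
      then show ?thesis by (rule AE_mp) (auto intro: AE_I2)
    qed
    have AEZ: "AE \<omega> in M n. Z n \<omega> i \<in> Om" if i: "i<m n" for i
    proof -
      have mz: "(\<lambda>\<omega>. Z n \<omega> i) \<in> measurable (M n) borel" using Z_meas i by auto
      have cs: "- Om \<in> sets borel" using Om(3) by auto
      have "emeasure (M n) ((\<lambda>\<omega>. Z n \<omega> i) -` (- Om) \<inter> space (M n)) = emeasure (distr (M n) borel (\<lambda>\<omega>. Z n \<omega> i)) (- Om)"
        using emeasure_distr[OF mz cs] by simp
      also have "\<dots> = emeasure (uniform_measure lborel Om) (- Om)" using Z_law i by simp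
      also have "\<dots> = 0" using Om(3) cs by (subst emeasure_uniform_measure) auto
      finally have z0: "emeasure (M n) ((\<lambda>\<omega>. Z n \<omega> i) -` (- Om) \<inter> space (M n)) = 0" .
      have ss: "(\<lambda>\<omega>. Z n \<omega> i) -` (- Om) \<inter> space (M n) \<in> sets (M n)"
        using mz cs by (intro measurable_sets) auto
      have eqs: "{\<omega>\<in>space (M n). \<not> Z n \<omega> i \<in> Om} = (\<lambda>\<omega>. Z n \<omega> i) -` (- Om) \<inter> space (M n)" by auto
      show ?thesis using AE_iff_measurable[OF ss eqs] z0 by simp
    qed
    have "AE \<omega> in M n. (\<forall>i\<in>{..<n}. Y n \<omega> i \<in> z ` {..<k}) \<and> (\<forall>i\<in>{..<m n}. Z n \<omega> i \<in> Om)"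
      using AEY AEZ by (intro AE_conjI AE_finite_allI) auto
    then have "AE \<omega> in M n. \<omega> \<in> G n" using AE_space
      by eventually_elim (auto simp: G_def)
    then have "measure (M n) (G n) = 1" using P.prob_eq_1[OF Gs] by simp
    then show ?thesis using Gs by simp
  qed
  have probK: "K n \<in> sets (M n) \<and> 1 - s / real n \<le> measure (M n) (K n)" if n: "0 < n" for n
  proof -
    interpret P: prob_space "M n" using prob by auto
    define Bad where "Bad j = {\<omega>\<in>space (M n). cnt n j \<omega> < real n * pr j / 2}" for j
    have Bs: "Bad j \<in> sets (M n)" for j
      unfolding Bad_def using cnt_meas[of n j] by measurable
    have Ks: "K n = space (M n) - (\<Union>j\<in>{..<k}. Bad j)" unfolding K_def Bad_def by auto (meson lessThan_iff not_le)
    have Ksets: "K n \<in> sets (M n)" unfolding Ks using Bs by auto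
    have Bb: "measure (M n) (Bad j) \<le> 4 / (real n * pr j)" if j: "j<k" for j
    proof -
      have "P.prob {x\<in>space (M n). (\<Sum>i<n. indicator (Aev n j i) x) < real n * pr j / 2} \<le> 4 / (real n * pr j)"
      proof (rule P.cheb_count)
        show "Aev n j i \<in> P.events" if "i<n" for i using Aev_sets[OF that] .
        show "P.prob (Aev n j i) = pr j" if "i<n" for i using Y_law that j unfolding Aev_def by auto
        show "0 < pr j" using pr_pos j by auto
        show "0 < n" by (rule n)
        fix i l assume il: "i<n" "l<n" "i\<noteq>l"
        have X: "(\<lambda>\<omega>. stack n (Y n \<omega>) (Z n \<omega>) t) -` {z j} \<inter> space (M n) = Aev n j t" if "t<n" for t
          unfolding Aev_def stack_def using that by auto
        have "P.prob (((\<lambda>\<omega>. stack n (Y n \<omega>) (Z n \<omega>) i) -` {z j} \<inter> space (M n)) \<inter>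
                ((\<lambda>\<omega>. stack n (Y n \<omega>) (Z n \<omega>) l) -` {z j} \<inter> space (M n)))
             = P.prob ((\<lambda>\<omega>. stack n (Y n \<omega>) (Z n \<omega>) i) -` {z j} \<inter> space (M n)) *
               P.prob ((\<lambda>\<omega>. stack n (Y n \<omega>) (Z n \<omega>) l) -` {z j} \<inter> space (M n))"
          using X_indep il by (intro P.indep_pair[where I="{..<n + m n}"]) auto
        then show "P.prob (Aev n j i \<inter> Aev n j l) = pr j * pr j"
          using X[OF il(1)] X[OF il(2)] Y_law il j unfolding Aev_def by auto
      qed
      then show ?thesis unfolding Bad_def cnt_def .
    qed
    have "measure (M n) (\<Union>j\<in>{..<k}. Bad j) \<le> (\<Sum>j<k. measure (M n) (Bad j))"
      using Bs by (intro P.finite_measure_subadditive_finite) auto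
    also have "\<dots> \<le> (\<Sum>j<k. 4 / (real n * pr j))" using Bb by (intro sum_mono) auto
    also have "\<dots> = s / real n" unfolding s_def by (simp add: sum_divide_distrib sum_distrib_left mult.commute)
    finally have "measure (M n) (\<Union>j\<in>{..<k}. Bad j) \<le> s / real n" .
    moreover have "measure (M n) (K n) = 1 - measure (M n) (\<Union>j\<in>{..<k}. Bad j)"
      unfolding Ks using Bs by (intro P.prob_compl) auto
    ultimately show ?thesis using Ksets by simp
  qed
  have Fsets: "F n \<in> sets (M n)" for n
  proof (cases "good n")
    case True
    then show ?thesis unfolding F_def using Emeas probG probK[of n] by (auto simp: good_def)
  next
    case False then show ?thesis unfolding F_def by simp
  qed
  have Flow: "measure (M n) (E n) - s / real n \<le> measure (M n) (F n)" if "good n" for n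
  proof -
    interpret P: prob_space "M n" using prob by auto
    have n: "0 < n" using that by (simp add: good_def)
    have "measure (M n) (E n) + measure (M n) (G n) - 1 \<le> measure (M n) (E n \<inter> G n)"
      using Emeas probG by (intro P.prob_Int_ge) auto
    moreover have "measure (M n) (E n \<inter> G n) + measure (M n) (K n) - 1 \<le> measure (M n) (E n \<inter> G n \<inter> K n)"
      using Emeas probG probK[OF n] by (intro P.prob_Int_ge) auto
    ultimately show ?thesis using probG[of n] probK[OF n] that unfolding F_def by simp
  qed
  have Flim: "(\<lambda>n. measure (M n) (F n)) \<longlonglongrightarrow> 1"
  proof (rule tendsto_sandwich)
    show "eventually (\<lambda>n. measure (M n) (E n) - s / real n \<le> measure (M n) (F n)) sequentially"
      using ev_good by eventually_elim (rule Flow)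
    show "eventually (\<lambda>n. measure (M n) (F n) \<le> 1) sequentially"
      using prob by (intro always_eventually allI) (simp add: prob_space.prob_le_1)
    show "(\<lambda>n. 1) \<longlonglongrightarrow> (1::real)" by simp
    have "(\<lambda>n. measure (M n) (E n) - s / real n) \<longlonglongrightarrow> 1 - 0"
      by (intro tendsto_intros Elim tendsto_divide_0[OF tendsto_const] filterlim_real_sequentially)
    then show "(\<lambda>n. measure (M n) (E n) - s / real n) \<longlonglongrightarrow> 1" by simp
  qed
  show ?thesis
  proof (intro exI[of _ F] conjI allI ballI impI)
    show "F n \<in> sets (M n)" for n by (rule Fsets)
    show "(\<lambda>n. measure (M n) (F n)) \<longlonglongrightarrow> 1" by (rule Flim)
  next
    fix n \<omega> Phi P1 P2
    assume \<omega>F: "\<omega> \<in> F n" and mini: "rkm_minimizer k (lam n) (n + m n) (\<lambda>i. Q n *v Xh n \<omega> i) Phi P1 P2"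
    have gd: "good n" using \<omega>F unfolding F_def by (auto split: if_splits)
    have \<omega>E: "\<omega> \<in> E n" and \<omega>G: "\<omega> \<in> G n" and \<omega>K: "\<omega> \<in> K n" using \<omega>F gd unfolding F_def by auto
    have \<omega>s: "\<omega> \<in> space (M n)" using \<omega>G unfolding G_def by auto
    define W where "W i = sqrt nu *\<^sub>R stack n (Y n \<omega>) (Z n \<omega>) i" for i
    define w where "w j = sqrt nu *\<^sub>R z j" for j
    have snu: "0 < sqrt nu" "sqrt nu \<le> 1" using nu by auto
    have WY: "W i = sqrt nu *\<^sub>R Y n \<omega> i" if "i<n" for i unfolding W_def stack_def using that by simp
    have Weq: "W i = W i' \<longleftrightarrow> Y n \<omega> i = Y n \<omega> i'" if "i<n" "i'<n" for i i'
      using WY[OF that(1)] WY[OF that(2)] snu by simp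
    have nsc: "norm (sqrt nu *\<^sub>R x) \<le> R" if "x \<in> Xd" for x
    proof -
      have "norm (sqrt nu *\<^sub>R x) = sqrt nu * norm x" using snu by simp
      also have "\<dots> \<le> 1 * norm x" using snu by (intro mult_right_mono) auto
      also have "\<dots> \<le> R" using Rb that by simp
      finally show ?thesis .
    qed
    have C: "(let r = min (lam n / 3) (eta / 6) in
          (\<forall>j<k. card (Phi \<inter> cball (w j) r) = 1)
        \<and> {..<n} \<subseteq> P1
        \<and> (\<forall>i<n. \<forall>\<phi>. nearest Phi (Q n *v Xh n \<omega> i) \<phi> \<longleftrightarrow> \<phi> \<in> Phi \<inter> cball (W i) r)
        \<and> (\<forall>i<n. \<forall>i'<n. (\<exists>\<phi>. nearest Phi (Q n *v Xh n \<omega> i) \<phi> \<and> nearest Phi (Q n *v Xh n \<omega> i') \<phi>) \<longleftrightarrow> W i = W i'))"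
    proof (rule core[where rmin=r0 and \<delta>=\<delta> and \<epsilon>="eps n" and B=R and N="n + m n"])
      show "inj_on w {..<k}" unfolding w_def using z_distinct snu by (auto simp: inj_on_def)
      show "\<forall>j<k. \<forall>l<k. j \<noteq> l \<longrightarrow> eta < norm (w j - w l)" unfolding w_def using D1(2) by simp
      show "0 < r0" by (rule r0)
      show "r0 \<le> min (lam n / 3) (eta / 6)" unfolding r0_def using D3(2)[rule_format, of n] by auto
      show "\<forall>i<n. \<exists>j<k. W i = w j"
        using \<omega>G unfolding G_def w_def by (auto simp: WY)
      show "0 < \<delta>" by (rule \<delta>)
      show "0 < n" using gd by (simp add: good_def)
      show "0 \<le> eps n" by (rule eps0)
      show "0 \<le> R" by (rule R0)
      show "\<forall>j<k. \<delta> * real n \<le> real (card {i. i < n \<and> W i = w j})"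
      proof (intro allI impI)
        fix j assume j: "j<k"
        have "{i. i < n \<and> W i = w j} = {i. i < n \<and> Y n \<omega> i = z j}"
          using WY snu unfolding w_def by auto
        moreover have "real n * pr j / 2 \<le> cnt n j \<omega>" using \<omega>K j unfolding K_def by auto
        moreover have "\<delta> * real n \<le> real n * pr j / 2"
        proof -
          have "pmin * real n \<le> pr j * real n" using pmin j by (intro mult_right_mono) auto
          then show ?thesis unfolding \<delta>_def by (simp add: mult.commute)
        qed
        ultimately show "\<delta> * real n \<le> real (card {i. i < n \<and> W i = w j})"
          using cnt_card[OF \<omega>s] by simp
      qed
      show "\<forall>i<n + m n. norm (Q n *v Xh n \<omega> i - W i) \<le> eps n"
        using Ebound \<omega>E unfolding W_def eps_def by auto
      show "n \<le> n + m n" by simp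
      show "\<forall>i<n + m n. n \<le> i \<longrightarrow> norm (W i) \<le> R"
      proof (intro allI impI)
        fix i assume i: "i < n + m n" "n \<le> i"
        have "W i = sqrt nu *\<^sub>R Z n \<omega> (i - n)" unfolding W_def stack_def using i by simp
        moreover have "Z n \<omega> (i - n) \<in> Xd" using \<omega>G i Om(1) unfolding G_def by auto
        ultimately show "norm (W i) \<le> R" using nsc by simp
      qed
      show "\<forall>j<k. norm (w j) \<le> R" unfolding w_def using z_in nsc by auto
      show "eps n \<le> r0 / 4" using gd by (simp add: good_def)
      show "real (n + m n) * eps n + 2 * R * (real (n + m n) - real n) < \<delta> * real n * r0 / 2"
        using gd by (simp add: good_def)
      show "rkm_minimizer k (lam n) (n + m n) (\<lambda>i. Q n *v Xh n \<omega> i) Phi P1 P2" by (rule mini)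
    qed
    show "let r = min (lam n / 3) (eta / 6) in
          (\<forall>j<k. card (Phi \<inter> cball (sqrt nu *\<^sub>R z j) r) = 1)
        \<and> {..<n} \<subseteq> P1
        \<and> (\<forall>i<n. \<forall>\<phi>. nearest Phi (Q n *v Xh n \<omega> i) \<phi> \<longleftrightarrow>
                      \<phi> \<in> Phi \<inter> cball (sqrt nu *\<^sub>R Y n \<omega> i) r)
        \<and> (\<forall>i<n. \<forall>i'<n. (\<exists>\<phi>. nearest Phi (Q n *v Xh n \<omega> i) \<phi> \<and>
                                nearest Phi (Q n *v Xh n \<omega> i') \<phi>) \<longleftrightarrow> Y n \<omega> i = Y n \<omega> i')"
    proof -
      define rr where "rr = min (lam n / 3) (eta / 6)"
      have C1: "\<forall>j<k. card (Phi \<inter> cball (w j) rr) = 1"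
        and C2: "{..<n} \<subseteq> P1"
        and C3: "\<forall>i<n. \<forall>\<phi>. nearest Phi (Q n *v Xh n \<omega> i) \<phi> \<longleftrightarrow> \<phi> \<in> Phi \<inter> cball (W i) rr"
        and C4: "\<forall>i<n. \<forall>i'<n. (\<exists>\<phi>. nearest Phi (Q n *v Xh n \<omega> i) \<phi> \<and> nearest Phi (Q n *v Xh n \<omega> i') \<phi>) \<longleftrightarrow> W i = W i'"
        using C unfolding Let_def rr_def by blast+
      show ?thesis unfolding Let_def rr_def[symmetric]
      proof (intro conjI allI impI)
        show "card (Phi \<inter> cball (sqrt nu *\<^sub>R z j) rr) = 1" if "j<k" for j
          using C1 that unfolding w_def by blast
        show "{..<n} \<subseteq> P1" by (rule C2)
        show "nearest Phi (Q n *v Xh n \<omega> i) \<phi> \<longleftrightarrow> \<phi> \<in> Phi \<inter> cball (sqrt nu *\<^sub>R Y n \<omega> i) rr"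
          if "i<n" for i \<phi> using C3 that WY[OF that] by metis
        show "(\<exists>\<phi>. nearest Phi (Q n *v Xh n \<omega> i) \<phi> \<and> nearest Phi (Q n *v Xh n \<omega> i') \<phi>) \<longleftrightarrow> Y n \<omega> i = Y n \<omega> i'"
          if "i<n" "i'<n" for i i' using C4 that Weq[OF that] by metis
      qed
    qed
  qed
qed

end
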